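(* Let $\mathfrak g$ be a finite-dimensional completely solvable Lie superalgebra over $\mathbf k$. Then every proper (graded) sub-superalgebra of $\mathfrak g$ is contained in a sub-superalgebra of $\mathfrak g$ of codimension one.
   Context: $\mathbf k$ is algebraically closed of characteristic $p>2$. A Lie superalgebra $\mathfrak g$ is completely solvable if $[\mathfrak g,\mathfrak g]$ is nilpotent. Sub-superalgebras are $\mathbb Z_2$-graded subalgebras. *)

theory Defs
  imports Main "HOL-Computational_Algebra.Polynomial"
begin

definition alg_closed_field :: "'k::field itself \<Rightarrow> bool" where
  "alg_closed_field _ \<longleftrightarrow> (\<forall>q :: 'k poly. 0 < degree q \<longrightarrow> (\<exists>x. poly q x = 0))"

text \<open>A Lie superalgebra structure on the k-vector space 'v (scalar multiplication sc),
  with Z2-grading V False (even part) and V True (odd part), and bracket br.\<close>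
definition lie_superalgebra ::
  "('k::field \<Rightarrow> 'v::ab_group_add \<Rightarrow> 'v) \<Rightarrow> (bool \<Rightarrow> 'v set) \<Rightarrow> ('v \<Rightarrow> 'v \<Rightarrow> 'v) \<Rightarrow> bool" where
  "lie_superalgebra sc V br \<longleftrightarrow>
     vector_space sc \<and>
     module.subspace sc (V False) \<and> module.subspace sc (V True) \<and>
     V False \<inter> V True = {0} \<and>
     (\<forall>v. \<exists>a\<in>V False. \<exists>b\<in>V True. v = a + b) \<and>
     (\<forall>x y z. br (x + y) z = br x z + br y z) \<and>
     (\<forall>x y z. br x (y + z) = br x y + br x z) \<and>
     (\<forall>c x y. br (sc c x) y = sc c (br x y)) \<and>
     (\<forall>c x y. br x (sc c y) = sc c (br x y)) \<and>
     (\<forall>i j x y. x \<in> V i \<longrightarrow> y \<in> V j \<longrightarrow> br x y \<in> V (i \<noteq> j)) \<and>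
     (\<forall>i j x y. x \<in> V i \<longrightarrow> y \<in> V j \<longrightarrow>
        br x y = (if i \<and> j then br y x else - br y x)) \<and>
     (\<forall>i j x y z. x \<in> V i \<longrightarrow> y \<in> V j \<longrightarrow>
        br x (br y z) = br (br x y) z + (if i \<and> j then - br y (br x z) else br y (br x z))) \<and>
     (\<forall>x \<in> V True. br x (br x x) = 0)"

definition fin_dim :: "('k::field \<Rightarrow> 'v::ab_group_add \<Rightarrow> 'v) \<Rightarrow> bool" where
  "fin_dim sc \<longleftrightarrow> (\<exists>B. finite B \<and> module.span sc B = UNIV)"

definition sub_superalgebra ::
  "('k::field \<Rightarrow> 'v::ab_group_add \<Rightarrow> 'v) \<Rightarrow> (bool \<Rightarrow> 'v set) \<Rightarrow> ('v \<Rightarrow> 'v \<Rightarrow> 'v) \<Rightarrow> 'v set \<Rightarrow> bool" where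
  "sub_superalgebra sc V br S \<longleftrightarrow>
     module.subspace sc S \<and>
     (\<forall>v\<in>S. \<exists>a\<in>S \<inter> V False. \<exists>b\<in>S \<inter> V True. v = a + b) \<and>
     (\<forall>x\<in>S. \<forall>y\<in>S. br x y \<in> S)"

definition brk_sp ::
  "('k::field \<Rightarrow> 'v::ab_group_add \<Rightarrow> 'v) \<Rightarrow> ('v \<Rightarrow> 'v \<Rightarrow> 'v) \<Rightarrow> 'v set \<Rightarrow> 'v set \<Rightarrow> 'v set" where
  "brk_sp sc br A B = module.span sc {br a b | a b. a \<in> A \<and> b \<in> B}"

fun lower_central ::
  "('k::field \<Rightarrow> 'v::ab_group_add \<Rightarrow> 'v) \<Rightarrow> ('v \<Rightarrow> 'v \<Rightarrow> 'v) \<Rightarrow> 'v set \<Rightarrow> nat \<Rightarrow> 'v set" where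
  "lower_central sc br L 0 = L"
| "lower_central sc br L (Suc n) = brk_sp sc br L (lower_central sc br L n)"

definition nilpotent_sub ::
  "('k::field \<Rightarrow> 'v::ab_group_add \<Rightarrow> 'v) \<Rightarrow> ('v \<Rightarrow> 'v \<Rightarrow> 'v) \<Rightarrow> 'v set \<Rightarrow> bool" where
  "nilpotent_sub sc br L \<longleftrightarrow> (\<exists>n. lower_central sc br L n = {0})"

definition completely_solvable ::
  "('k::field \<Rightarrow> 'v::ab_group_add \<Rightarrow> 'v) \<Rightarrow> ('v \<Rightarrow> 'v \<Rightarrow> 'v) \<Rightarrow> bool" where
  "completely_solvable sc br \<longleftrightarrow> nilpotent_sub sc br (brk_sp sc br UNIV UNIV)"

end

theory Submission
  imports Defs
begin

locale LSA = finite_dimensional_vector_space sc Basis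
  for sc :: "'k::field \<Rightarrow> 'v::ab_group_add \<Rightarrow> 'v" and Basis :: "'v set" +
  fixes V :: "bool \<Rightarrow> 'v set" and br :: "'v \<Rightarrow> 'v \<Rightarrow> 'v"
  assumes lsa: "lie_superalgebra sc V br"
    and two: "(2::'k) \<noteq> 0"
    and acl: "alg_closed_field TYPE('k)"
begin

lemma V_sub: "subspace (V i)"
  using lsa unfolding lie_superalgebra_def by (cases i) auto

lemma V_int: "x \<in> V False \<Longrightarrow> x \<in> V True \<Longrightarrow> x = 0"
  using lsa unfolding lie_superalgebra_def by (elim conjE) blast

lemma decomp: obtains a b where "a \<in> V False" "b \<in> V True" "v = a + b"
proof -
  have "\<forall>v. \<exists>a\<in>V False. \<exists>b\<in>V True. v = a + b" using lsa unfolding lie_superalgebra_def by (elim conjE) blast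
  then show ?thesis using that by blast
qed

lemma ax1: "\<forall>x y z. br (x + y) z = br x z + br y z"
  using lsa unfolding lie_superalgebra_def by (elim conjE) assumption

lemma ax2: "\<forall>x y z. br x (y + z) = br x y + br x z"
  using lsa unfolding lie_superalgebra_def by (elim conjE) assumption

lemma ax3: "\<forall>c x y. br (sc c x) y = sc c (br x y)"
  using lsa unfolding lie_superalgebra_def by (elim conjE) assumption

lemma ax4: "\<forall>c x y. br x (sc c y) = sc c (br x y)"
  using lsa unfolding lie_superalgebra_def by (elim conjE) assumption

lemma ax5: "\<forall>i j x y. x \<in> V i \<longrightarrow> y \<in> V j \<longrightarrow> br x y \<in> V (i \<noteq> j)"
  using lsa unfolding lie_superalgebra_def by (elim conjE) assumption

lemma ax6: "\<forall>i j x y. x \<in> V i \<longrightarrow> y \<in> V j \<longrightarrow>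
        br x y = (if i \<and> j then br y x else - br y x)"
  using lsa unfolding lie_superalgebra_def by (elim conjE) assumption

lemma ax7: "\<forall>i j x y z. x \<in> V i \<longrightarrow> y \<in> V j \<longrightarrow>
        br x (br y z) = br (br x y) z + (if i \<and> j then - br y (br x z) else br y (br x z))"
  using lsa unfolding lie_superalgebra_def by (elim conjE) assumption

lemma ax8: "\<forall>x \<in> V True. br x (br x x) = 0"
  using lsa unfolding lie_superalgebra_def by (elim conjE) assumption

lemma br_addL: "br (x + y) z = br x z + br y z"
  using ax1 by blast
lemma br_addR: "br x (y + z) = br x y + br x z"
  using ax2 by blast
lemma br_scL: "br (sc c x) y = sc c (br x y)"
  using ax3 by blast
lemma br_scR: "br x (sc c y) = sc c (br x y)"
  using ax4 by blast
lemma grade: "x \<in> V i \<Longrightarrow> y \<in> V j \<Longrightarrow> br x y \<in> V (i \<noteq> j)"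
  using ax5 by blast
lemma anti: "x \<in> V i \<Longrightarrow> y \<in> V j \<Longrightarrow> br x y = (if i \<and> j then br y x else - br y x)"
  using ax6 by blast
lemma jac: "x \<in> V i \<Longrightarrow> y \<in> V j \<Longrightarrow>
        br x (br y z) = br (br x y) z + (if i \<and> j then - br y (br x z) else br y (br x z))"
  using ax7 by blast

lemma br_0L[simp]: "br 0 y = 0"
  using br_addL[of 0 0 y] by simp
lemma br_0R[simp]: "br x 0 = 0"
  using br_addR[of x 0 0] by simp
lemma br_negL: "br (- x) y = - br x y"
  using br_addL[of x "-x" y] by (simp add: neg_eq_iff_add_eq_0[symmetric])
lemma br_negR: "br x (- y) = - br x y"
  using br_addR[of x y "-y"] by (simp add: neg_eq_iff_add_eq_0[symmetric])
lemma br_diffL: "br (x - y) z = br x z - br y z"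
  using br_addL[of x "-y" z] by (simp add: br_negL)
lemma br_diffR: "br x (y - z) = br x y - br x z"
  using br_addR[of x y "-z"] by (simp add: br_negR)

definition graded :: "'v set \<Rightarrow> bool" where
  "graded W \<longleftrightarrow> (\<forall>x\<in>W. \<exists>a\<in>W \<inter> V False. \<exists>b\<in>W \<inter> V True. x = a + b)"

lemma graded_comp:
  assumes "graded W" "x \<in> W" "a \<in> V False" "b \<in> V True" "x = a + b"
  shows "a \<in> W" "b \<in> W"
proof -
  obtain a' b' where a': "a' \<in> W" "a' \<in> V False" and b': "b' \<in> W" "b' \<in> V True"
    and e: "x = a' + b'" using assms(1,2) unfolding graded_def by blast
  have "a - a' = b' - b" using e assms(5) by (simp add: algebra_simps)
  moreover have "a - a' \<in> V False" using subspace_diff[OF V_sub] assms(3) a' by blast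
  moreover have "b' - b \<in> V True" using subspace_diff[OF V_sub] assms(4) b' by blast
  ultimately have "a - a' = 0" "b' - b = 0" using V_int by metis+
  then show "a \<in> W" "b \<in> W" using a' b' by auto
qed

lemma graded_UNIV: "graded UNIV"
  unfolding graded_def by (metis IntI UNIV_I decomp)

lemma graded_span:
  assumes "G \<subseteq> V False \<union> V True"
  shows "graded (span G)"
  unfolding graded_def
proof
  fix x assume "x \<in> span G"
  then show "\<exists>a\<in>span G \<inter> V False. \<exists>b\<in>span G \<inter> V True. x = a + b"
  proof (induction rule: span_induct_alt)
    case base
    then show ?case by (intro bexI[of _ 0]) (auto simp: span_zero subspace_0[OF V_sub])
  next
    case (step c x y)
    then obtain a b where ab: "a \<in> span G" "a \<in> V False" "b \<in> span G" "b \<in> V True" "y = a + b"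
      by blast
    have cx: "sc c x \<in> span G" using step(1) by (simp add: span_base span_scale)
    show ?case
    proof (cases "x \<in> V False")
      case True
      then have "sc c x \<in> V False" using subspace_scale[OF V_sub] by blast
      then show ?thesis using ab cx
        by (intro bexI[of _ "sc c x + a"] bexI[of _ b])
           (auto simp: add.assoc intro: span_add subspace_add[OF V_sub])
    next
      case False
      then have "x \<in> V True" using step(1) assms by blast
      then have "sc c x \<in> V True" using subspace_scale[OF V_sub] by blast
      then show ?thesis using ab cx
        by (intro bexI[of _ a] bexI[of _ "sc c x + b"])
           (auto simp: algebra_simps intro: span_add subspace_add[OF V_sub])
    qed
  qed
qed

lemma span_map:
  assumes add: "\<And>x y. f (x + y) = f x + f y" and scl: "\<And>c x. f (sc c x) = sc c (f x)"
    and W: "subspace W" and G: "\<And>g. g \<in> G \<Longrightarrow> f g \<in> W" and x: "x \<in> span G"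
  shows "f x \<in> W"
  using x
proof (induction rule: span_induct_alt)
  case base
  have "f 0 = f 0 + f 0" using add[of 0 0] by simp
  then have "f 0 = 0" by simp
  then show ?case using subspace_0[OF W] by simp
next
  case (step c x y)
  then show ?case using add scl G subspace_add[OF W] subspace_scale[OF W] by auto
qed

lemma hom_swap:
  assumes "x \<in> V i" "y \<in> V j" "br y x \<in> W" "subspace W"
  shows "br x y \<in> W"
  using anti[OF assms(1,2)] assms(3) subspace_neg[OF assms(4)] by (cases "i \<and> j") auto

lemma graded_dec:
  assumes "graded A" "a \<in> A"
  obtains a0 a1 where "a0 \<in> A" "a0 \<in> V False" "a1 \<in> A" "a1 \<in> V True" "a = a0 + a1"
  using assms unfolding graded_def by blast

lemma br4:
  "br (a0 + a1) (b0 + b1) = br a0 b0 + br a0 b1 + br a1 b0 + br a1 b1"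
  by (simp add: br_addL br_addR add.assoc)

lemma sub_add4: "subspace W \<Longrightarrow> a \<in> W \<Longrightarrow> b \<in> W \<Longrightarrow> c \<in> W \<Longrightarrow> d \<in> W \<Longrightarrow> a + b + c + d \<in> W"
  by (simp add: subspace_add)

lemma bracket_hom:
  assumes "graded A" "graded B" "subspace W" "a \<in> A" "b \<in> B"
    and "\<And>x y i j. x \<in> A \<Longrightarrow> x \<in> V i \<Longrightarrow> y \<in> B \<Longrightarrow> y \<in> V j \<Longrightarrow> br x y \<in> W"
  shows "br a b \<in> W"
proof -
  obtain a0 a1 where a: "a0 \<in> A" "a0 \<in> V False" "a1 \<in> A" "a1 \<in> V True" "a = a0 + a1"
    using graded_dec[OF assms(1,4)] .
  obtain b0 b1 where b: "b0 \<in> B" "b0 \<in> V False" "b1 \<in> B" "b1 \<in> V True" "b = b0 + b1"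
    using graded_dec[OF assms(2,5)] .
  show ?thesis unfolding a(5) b(5) br4
    by (rule sub_add4[OF assms(3)]; rule assms(6)) (use a b in auto)
qed

lemma swap:
  assumes "graded A" "graded W" "subspace W" "\<And>a w. a \<in> A \<Longrightarrow> w \<in> W \<Longrightarrow> br a w \<in> W"
    "a \<in> A" "w \<in> W"
  shows "br w a \<in> W"
proof (rule bracket_hom[OF assms(2,1,3,6,5)])
  fix x y i j assume "x \<in> W" "x \<in> V i" "y \<in> A" "y \<in> V j"
  then show "br x y \<in> W" using hom_swap[of x i y j W] assms(3,4) by blast
qed

lemma brk_base: "a \<in> A \<Longrightarrow> b \<in> B \<Longrightarrow> br a b \<in> brk_sp sc br A B"
  unfolding brk_sp_def by (rule span_base) blast

lemma brk_sub: "subspace (brk_sp sc br A B)"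
  unfolding brk_sp_def by simp

lemma brk_graded:
  assumes "graded A" "graded B"
  shows "graded (brk_sp sc br A B)"
proof -
  let ?G = "{br a b | a b. a \<in> A \<and> b \<in> B}"
  let ?H = "{br a b | a b. a \<in> A \<and> b \<in> B \<and> (\<exists>i. a \<in> V i) \<and> (\<exists>j. b \<in> V j)}"
  have "?H \<subseteq> ?G" by blast
  moreover have "?G \<subseteq> span ?H"
  proof
    fix g assume "g \<in> ?G"
    then obtain a b where g: "g = br a b" "a \<in> A" "b \<in> B" by blast
    show "g \<in> span ?H" unfolding g(1)
      by (rule bracket_hom[OF assms subspace_span g(2,3)]) (rule span_base, blast)
  qed
  ultimately have eq: "span ?G = span ?H"
    using span_mono[of ?H ?G] span_minimal[of ?G "span ?H"] by blast
  have "?H \<subseteq> V False \<union> V True"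
  proof
    fix h assume "h \<in> ?H"
    then obtain a b i j where "h = br a b" "a \<in> V i" "b \<in> V j" by blast
    then have "h \<in> V (i \<noteq> j)" using grade by blast
    then show "h \<in> V False \<union> V True" by (cases "i \<noteq> j") auto
  qed
  then have "graded (span ?H)" by (rule graded_span)
  then show ?thesis unfolding brk_sp_def eq .
qed

abbreviation "NN \<equiv> brk_sp sc br UNIV UNIV"
abbreviation "LL j \<equiv> lower_central sc br NN j"

lemma NN_graded: "graded NN"
  using brk_graded[OF graded_UNIV graded_UNIV] .

lemma LL_sub: "subspace (LL j)"
  by (cases j) (auto simp: brk_sub)

lemma LL_subN: "LL j \<subseteq> NN"
proof (cases j)
  case (Suc k)
  have "{br a b | a b. a \<in> NN \<and> b \<in> LL k} \<subseteq> NN" using brk_base by blast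
  then show ?thesis unfolding Suc by (simp add: brk_sp_def span_minimal)
qed simp

lemma LL_graded: "graded (LL j)"
proof (induction j)
  case 0
  then show ?case using NN_graded by simp
next
  case (Suc j)
  then show ?case using brk_graded[OF NN_graded Suc.IH] by simp
qed

lemma LL_ideal: "q \<in> LL j \<Longrightarrow> br x q \<in> LL j"
proof (induction j arbitrary: x q)
  case 0
  then show ?case using brk_base by simp
next
  case (Suc j)
  have "q \<in> span {br a b | a b. a \<in> NN \<and> b \<in> LL j}"
    using Suc.prems by (simp add: brk_sp_def)
  moreover have "br x g \<in> LL (Suc j)" if "g \<in> {br a b | a b. a \<in> NN \<and> b \<in> LL j}" for g
  proof -
    from that obtain n q' where g: "g = br n q'" "n \<in> NN" "q' \<in> LL j" by blast
    have H: "br y (br m q') \<in> LL (Suc j)" if y: "y \<in> V i" and m: "m \<in> NN" "m \<in> V k" for y m i k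
    proof -
      have e: "br y (br m q') = br (br y m) q' + (if i \<and> k then - br m (br y q') else br m (br y q'))"
        using jac[OF y m(2)] .
      have ym: "br y m \<in> NN" by (rule brk_base) simp_all
      have 1: "br (br y m) q' \<in> LL (Suc j)" using brk_base[OF ym g(3)] by simp
      have 2: "br m (br y q') \<in> LL (Suc j)" using brk_base[OF m(1) Suc.IH[OF g(3)]] by simp
      show "br y (br m q') \<in> LL (Suc j)"
        unfolding e using subspace_add[OF LL_sub 1 2] subspace_add[OF LL_sub 1 subspace_neg[OF LL_sub 2]]
        by (cases "i \<and> k") simp_all
    qed
    obtain x0 x1 where x: "x0 \<in> V False" "x1 \<in> V True" "x = x0 + x1" using decomp .
    obtain n0 n1 where n: "n0 \<in> NN" "n0 \<in> V False" "n1 \<in> NN" "n1 \<in> V True" "n = n0 + n1"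
      using graded_dec[OF NN_graded g(2)] .
    have e4: "br x (br n q') = br x0 (br n0 q') + br x0 (br n1 q') + br x1 (br n0 q') + br x1 (br n1 q')"
      unfolding x(3) n(5) by (simp add: br_addL br_addR add.assoc)
    have "br x (br n q') \<in> LL (Suc j)"
      unfolding e4 by (rule sub_add4[OF LL_sub H H H H]; (rule x n)?)
    then show "br x g \<in> LL (Suc j)" using g by simp
  qed
  ultimately show ?case by (rule span_map[OF br_addR br_scR LL_sub, rotated])
qed

lemma LL_idealR: "q \<in> LL j \<Longrightarrow> br q x \<in> LL j"
  by (rule swap[OF graded_UNIV LL_graded LL_sub]) (auto intro: LL_ideal)

definition opoly :: "('v \<Rightarrow> 'v) \<Rightarrow> 'k poly \<Rightarrow> 'v \<Rightarrow> 'v" where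
  "opoly T q w = (\<Sum>i<Suc (degree q). sc (coeff q i) ((T ^^ i) w))"

lemma opoly_N:
  assumes "degree q < n"
  shows "opoly T q w = (\<Sum>i<n. sc (coeff q i) ((T ^^ i) w))"
  unfolding opoly_def
  by (rule sum.mono_neutral_left) (use assms in \<open>auto simp: coeff_eq_0\<close>)

lemma opoly_add: "opoly T (p + q) w = opoly T p w + opoly T q w"
proof -
  define n where "n = Suc (max (degree p) (degree q))"
  have "degree (p + q) < n" "degree p < n" "degree q < n"
    using degree_add_le_max[of p q] unfolding n_def by auto
  then show ?thesis by (simp add: opoly_N[where n=n] sum.distrib scale_left_distrib)
qed

lemma opoly_smult: "opoly T (smult c p) w = sc c (opoly T p w)"
proof -
  have d: "degree (smult c p) < Suc (degree p)" using degree_smult_le[of c p] by (rule le_imp_less_Suc)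
  have "opoly T (smult c p) w = (\<Sum>i<Suc (degree p). sc (coeff (smult c p) i) ((T ^^ i) w))"
    by (rule opoly_N[OF d])
  also have "\<dots> = sc c (opoly T p w)" by (simp only: opoly_def scale_sum_right coeff_smult scale_scale)
  finally show ?thesis .
qed

lemma opoly_0[simp]: "opoly T 0 w = 0"
  by (simp add: opoly_def)

lemma opoly_diff: "opoly T (p - q) w = opoly T p w - opoly T q w"
  using opoly_add[of T p "smult (-1) q" w] opoly_smult[of T "-1" q w] by simp

lemma opoly_monom: "opoly T (monom a k) w = sc a ((T ^^ k) w)"
proof -
  have "degree (monom a k) < Suc k" by (simp add: degree_monom_le le_imp_less_Suc)
  then have "opoly T (monom a k) w = (\<Sum>i<Suc k. sc (if k = i then a else 0) ((T ^^ i) w))"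
    by (simp add: opoly_N[where n="Suc k"])
  also have "\<dots> = (\<Sum>i<Suc k. if i = k then sc a ((T ^^ i) w) else 0)"
    by (rule sum.cong) auto
  also have "\<dots> = sc a ((T ^^ k) w)" by (simp add: sum.delta)
  finally show ?thesis .
qed

lemma opoly_sum: "finite A \<Longrightarrow> opoly T (\<Sum>i\<in>A. p i) w = (\<Sum>i\<in>A. opoly T (p i) w)"
  by (induction A rule: finite_induct) (auto simp: opoly_add)

context
  fixes T :: "'v \<Rightarrow> 'v"
  assumes T_add: "\<And>x y. T (x + y) = T x + T y" and T_sc: "\<And>c x. T (sc c x) = sc c (T x)"
begin

lemma T_0: "T 0 = 0"
  using T_add[of 0 0] by simp

lemma T_sum: "finite A \<Longrightarrow> T (\<Sum>i\<in>A. f i) = (\<Sum>i\<in>A. T (f i))"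
  by (induction A rule: finite_induct) (auto simp: T_0 T_add)

lemma T_diff: "T (x - y) = T x - T y"
  using T_sc[of "-1" y] T_add[of x "- y"] by simp

lemma opoly_pCons0: "opoly T (pCons 0 p) w = T (opoly T p w)"
proof -
  have d: "degree (pCons 0 p) < Suc (Suc (degree p))"
    using degree_pCons_le[of 0 p] by (rule le_imp_less_Suc)
  have "opoly T (pCons 0 p) w = (\<Sum>i<Suc (Suc (degree p)). sc (coeff (pCons 0 p) i) ((T ^^ i) w))"
    by (rule opoly_N[OF d])
  also have "\<dots> = sc (coeff (pCons 0 p) 0) ((T ^^ 0) w) +
       (\<Sum>i<Suc (degree p). sc (coeff (pCons 0 p) (Suc i)) ((T ^^ Suc i) w))"
    by (rule sum.lessThan_Suc_shift)
  also have "\<dots> = (\<Sum>i<Suc (degree p). sc (coeff p i) (T ((T ^^ i) w)))"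
    by (simp only: coeff_pCons_0 coeff_pCons_Suc scale_zero_left add_0_left funpow.simps comp_apply)
  also have "\<dots> = (\<Sum>i<Suc (degree p). T (sc (coeff p i) ((T ^^ i) w)))"
    by (simp only: T_sc)
  also have "\<dots> = T (opoly T p w)"
    unfolding opoly_def by (rule T_sum[symmetric]) simp
  finally show ?thesis .
qed

lemma opoly_lin: "opoly T ([:-c, 1:] * r) w = T (opoly T r w) - sc c (opoly T r w)"
proof -
  have "[:-c, 1:] * r = smult (-c) r + pCons 0 r" by simp
  then show ?thesis by (simp add: opoly_add opoly_diff opoly_smult opoly_pCons0)
qed

lemma eigen_aux:
  assumes U: "subspace U"
  shows "q \<noteq> 0 \<Longrightarrow> w \<notin> U \<Longrightarrow> opoly T q w \<in> U \<Longrightarrow> \<exists>v c. v \<notin> U \<and> T v - sc c v \<in> U"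
proof (induction "degree q" arbitrary: q rule: less_induct)
  case less
  show ?case
  proof (cases "degree q = 0")
    case True
    then have e: "opoly T q w = sc (coeff q 0) w" by (simp add: opoly_def)
    have a: "coeff q 0 \<noteq> 0" using less.prems(1) True leading_coeff_0_iff by metis
    have "sc (inverse (coeff q 0)) (sc (coeff q 0) w) \<in> U"
      using less.prems(3) e subspace_scale[OF U] by metis
    then have "w \<in> U" using a by simp
    then show ?thesis using less.prems(2) by blast
  next
    case False
    then obtain c where "poly q c = 0" using acl unfolding alg_closed_field_def by blast
    then obtain r where r: "q = [:-c,1:] * r" using poly_eq_0_iff_dvd dvdE by blast
    have r0: "r \<noteq> 0" using less.prems(1) r by auto
    have dr: "degree r < degree q" using r r0 degree_mult_eq[of "[:-c,1:]" r] by simp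
    show ?thesis
    proof (cases "opoly T r w \<in> U")
      case True
      then show ?thesis using less.hyps[OF dr r0 less.prems(2)] by blast
    next
      case False
      have "T (opoly T r w) - sc c (opoly T r w) \<in> U"
        using less.prems(3) unfolding r opoly_lin .
      then show ?thesis using False by blast
    qed
  qed
qed

lemma annih: "\<exists>q. q \<noteq> 0 \<and> opoly T q w = 0"
proof -
  define f where "f i = (T ^^ i) w" for i
  define d where "d = dim (UNIV :: 'v set)"
  show ?thesis
  proof (cases "inj_on f {..d}")
    case True
    let ?F = "f ` {..d}"
    have fin: "finite ?F" by simp
    have card: "card ?F = Suc d" using card_image[OF True] by simp
    have "dim ?F \<le> d" using dim_subset[of ?F UNIV] d_def by simp
    then have dep: "dependent ?F" by (intro dependent_biggerset_general) (use card in auto)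
    then obtain u where u: "\<exists>v\<in>?F. u v \<noteq> 0" "(\<Sum>v\<in>?F. sc (u v) v) = 0"
      using dependent_finite[OF fin] by blast
    define q where "q = (\<Sum>i\<le>d. monom (u (f i)) i)"
    have cq: "coeff q k = (if k \<le> d then u (f k) else 0)" for k
      by (simp add: q_def coeff_sum)
    obtain i where i: "i \<le> d" "u (f i) \<noteq> 0" using u(1) by auto
    have "coeff q i \<noteq> 0" using cq i by simp
    then have q0: "q \<noteq> 0" by auto
    have "opoly T q w = (\<Sum>i\<le>d. sc (u (f i)) (f i))"
      unfolding q_def by (simp add: opoly_sum opoly_monom f_def)
    also have "\<dots> = (\<Sum>v\<in>?F. sc (u v) v)"
      using sum.reindex[OF True, of "\<lambda>v. sc (u v) v"] by simp
    finally show ?thesis using q0 u(2) by auto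
  next
    case False
    then obtain i j where ij: "i \<le> d" "j \<le> d" "i \<noteq> j" "f i = f j" unfolding inj_on_def by auto
    define q where "q = monom (1::'k) i - monom 1 j"
    have "coeff q i = 1" using ij(3) by (simp add: q_def)
    then have "q \<noteq> 0" by auto
    moreover have "opoly T q w = 0"
      using ij(4) by (simp add: q_def opoly_diff opoly_monom f_def)
    ultimately show ?thesis by blast
  qed
qed

lemma eigen:
  assumes "subspace U" "U \<noteq> UNIV"
  shows "\<exists>v c. v \<notin> U \<and> T v - sc c v \<in> U"
proof -
  obtain w where w: "w \<notin> U" using assms(2) by blast
  obtain q where q: "q \<noteq> 0" "opoly T q w = 0" using annih by blast
  have "opoly T q w \<in> U" using q(2) subspace_0[OF assms(1)] by simp
  then show ?thesis by (rule eigen_aux[OF assms(1) q(1) w])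
qed

end

lemma graded_plus:
  assumes "graded A" "graded B"
  shows "graded {a + b | a b. a \<in> A \<and> b \<in> B}"
  unfolding graded_def
proof
  fix x assume "x \<in> {a + b | a b. a \<in> A \<and> b \<in> B}"
  then obtain a b where x: "x = a + b" "a \<in> A" "b \<in> B" by blast
  obtain a0 a1 where a: "a0 \<in> A" "a0 \<in> V False" "a1 \<in> A" "a1 \<in> V True" "a = a0 + a1"
    using graded_dec[OF assms(1) x(2)] .
  obtain b0 b1 where b: "b0 \<in> B" "b0 \<in> V False" "b1 \<in> B" "b1 \<in> V True" "b = b0 + b1"
    using graded_dec[OF assms(2) x(3)] .
  have "a0 + b0 \<in> V False" "a1 + b1 \<in> V True" using a b subspace_add[OF V_sub] by blast+
  moreover have "x = (a0 + b0) + (a1 + b1)" using x a b by (simp add: algebra_simps)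
  ultimately show "\<exists>a\<in>{a + b |a b. a \<in> A \<and> b \<in> B} \<inter> V False.
            \<exists>b\<in>{a + b |a b. a \<in> A \<and> b \<in> B} \<inter> V True. x = a + b"
    using a b by blast
qed

context
  fixes M0 :: "'v set"
  assumes M0sub: "subspace M0" and M0gr: "graded M0"
    and M0alg: "\<And>x y. x \<in> M0 \<Longrightarrow> y \<in> M0 \<Longrightarrow> br x y \<in> M0"
    and Nkill: "\<And>n v. n \<in> M0 \<Longrightarrow> n \<in> NN \<Longrightarrow> br n v \<in> M0"
begin

definition invar :: "'v set \<Rightarrow> bool" where
  "invar U \<longleftrightarrow> (\<forall>m\<in>M0. \<forall>u\<in>U. br m u \<in> U)"

definition good :: "'v set \<Rightarrow> bool" where
  "good U \<longleftrightarrow> subspace U \<and> graded U \<and> M0 \<subseteq> U \<and> invar U"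

lemma good_M0: "good M0"
  unfolding good_def invar_def using M0sub M0gr M0alg by blast

lemma good_D: "good U \<Longrightarrow> subspace U \<and> graded U"
  unfolding good_def by blast

lemma invar_hom:
  assumes "subspace K" "\<And>m j v. m \<in> M0 \<Longrightarrow> m \<in> V j \<Longrightarrow> v \<in> K \<Longrightarrow> br m v \<in> K"
  shows "invar K"
  unfolding invar_def
proof (intro ballI)
  fix m v assume m: "m \<in> M0" and v: "v \<in> K"
  obtain a b where "a \<in> M0" "a \<in> V False" "b \<in> M0" "b \<in> V True" "m = a + b"
    using graded_dec[OF M0gr m] .
  then show "br m v \<in> K" using assms v subspace_add[OF assms(1)] by (simp add: br_addL)
qed

lemma killU: "good U \<Longrightarrow> m \<in> M0 \<Longrightarrow> m' \<in> M0 \<Longrightarrow> br (br m m') v \<in> U"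
  using Nkill[OF M0alg[of m m']] brk_base[of m UNIV m' UNIV] unfolding good_def by auto

lemma step:
  assumes g: "good U" and nU: "U \<noteq> UNIV" and d: "dim (UNIV :: 'v set) \<noteq> dim U + 1"
  shows "\<exists>U'. good U' \<and> U \<subset> U' \<and> U' \<noteq> UNIV"
proof -
  have Usub: "subspace U" and Ugr: "graded U" and M0U: "M0 \<subseteq> U" and Uinv: "invar U"
    using g unfolding good_def by auto
  have Uinv': "br m u \<in> U" if "m \<in> M0" "u \<in> U" for m u using Uinv that unfolding invar_def by blast
  show ?thesis
  proof (cases "\<exists>m. m \<in> M0 \<and> m \<in> V False \<and> \<not> (\<exists>c. \<forall>v. br m v - sc c v \<in> U)")
    case True
    then obtain m where m: "m \<in> M0" "m \<in> V False" and ns: "\<not> (\<exists>c. \<forall>v. br m v - sc c v \<in> U)"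
      by blast
    obtain v0 c where v0: "v0 \<notin> U" "br m v0 - sc c v0 \<in> U"
      using eigen[where T="br m", OF br_addR br_scR Usub nU] by blast
    define K where "K = {v. br m v - sc c v \<in> U}"
    have Ksub: "subspace K"
    proof (rule subspaceI)
      show "0 \<in> K" using subspace_0[OF Usub] by (simp add: K_def)
      fix x y assume "x \<in> K" "y \<in> K"
      then have "(br m x - sc c x) + (br m y - sc c y) \<in> U"
        using subspace_add[OF Usub] by (simp add: K_def)
      then show "x + y \<in> K" by (simp add: K_def br_addR scale_right_distrib algebra_simps)
    next
      fix a x assume "x \<in> K"
      then have "sc a (br m x - sc c x) \<in> U" using subspace_scale[OF Usub] by (simp add: K_def)
      then show "sc a x \<in> K"
        by (simp add: K_def br_scR scale_right_diff_distrib mult.commute)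
    qed
    have UK: "U \<subseteq> K"
      using Uinv' m(1) subspace_scale[OF Usub] subspace_diff[OF Usub] by (auto simp: K_def)
    have v0K: "v0 \<in> K" using v0 by (simp add: K_def)
    have KU: "K \<noteq> UNIV" using ns by (auto simp: K_def)
    have Kgr: "graded K"
      unfolding graded_def
    proof
      fix x assume x: "x \<in> K"
      obtain x0 x1 where xs: "x0 \<in> V False" "x1 \<in> V True" "x = x0 + x1" using decomp .
      have e: "br m x - sc c x = (br m x0 - sc c x0) + (br m x1 - sc c x1)"
        unfolding xs(3) by (simp add: br_addR scale_right_distrib algebra_simps)
      have h0: "br m x0 - sc c x0 \<in> V False"
        using grade[OF m(2) xs(1)] subspace_scale[OF V_sub xs(1)] subspace_diff[OF V_sub] by simp
      have h1: "br m x1 - sc c x1 \<in> V True"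
        using grade[OF m(2) xs(2)] subspace_scale[OF V_sub xs(2)] subspace_diff[OF V_sub] by simp
      have "br m x - sc c x \<in> U" using x by (simp add: K_def)
      then have "br m x0 - sc c x0 \<in> U" "br m x1 - sc c x1 \<in> U"
        using graded_comp[OF Ugr _ h0 h1 e] by auto
      then show "\<exists>a\<in>K \<inter> V False. \<exists>b\<in>K \<inter> V True. x = a + b"
        using xs by (auto simp: K_def)
    qed
    have Kinv: "invar K"
    proof (rule invar_hom[OF Ksub])
      fix m' j v assume m': "m' \<in> M0" "m' \<in> V j" and v: "v \<in> K"
      have e: "br m (br m' v) = br (br m m') v + br m' (br m v)"
        using jac[OF m(2) m'(2), of v] by simp
      have "br m (br m' v) - sc c (br m' v) = br (br m m') v + br m' (br m v - sc c v)"
        unfolding e by (simp add: br_diffR br_scR)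
      moreover have "br (br m m') v \<in> U" using killU[OF g m(1) m'(1)] .
      moreover have "br m' (br m v - sc c v) \<in> U" using Uinv' m'(1) v by (simp add: K_def)
      ultimately show "br m' v \<in> K" using subspace_add[OF Usub] by (simp add: K_def)
    qed
    have "good K" unfolding good_def using Ksub Kgr Kinv UK M0U by auto
    then show ?thesis using UK v0 v0K KU by blast
  next
    case noeven: False
    show ?thesis
    proof (cases "\<exists>b. b \<in> M0 \<and> b \<in> V True \<and> \<not> (\<forall>v. br b v \<in> U)")
      case True
      then obtain b v where b: "b \<in> M0" "b \<in> V True" and v: "br b v \<notin> U" by blast
      define K where "K = {v. br b v \<in> U}"
      have Ksub: "subspace K"
        unfolding K_def by (rule subspaceI) (auto simp: br_addR br_scR subspace_0[OF Usub]
            subspace_add[OF Usub] subspace_scale[OF Usub])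
      have UK: "U \<subseteq> K" using Uinv' b(1) by (auto simp: K_def)
      have KU: "K \<noteq> UNIV" using v by (auto simp: K_def)
      have "br b (br b v) = br (br b b) v - br b (br b v)"
        using jac[OF b(2) b(2), of v] by simp
      then have "sc 2 (br b (br b v)) = br (br b b) v"
        using scale_left_distrib[of 1 1 "br b (br b v)"] by (simp add: eq_diff_eq)
      then have "sc 2 (br b (br b v)) \<in> U" using killU[OF g b(1) b(1)] by simp
      then have "sc (inverse 2) (sc 2 (br b (br b v))) \<in> U" using subspace_scale[OF Usub] by blast
      then have "br b v \<in> K" using two by (simp add: K_def)
      have Kgr: "graded K"
        unfolding graded_def
      proof
        fix x assume x: "x \<in> K"
        obtain x0 x1 where xs: "x0 \<in> V False" "x1 \<in> V True" "x = x0 + x1" using decomp .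
        have e: "br b x = br b x1 + br b x0" unfolding xs(3) by (simp add: br_addR add.commute)
        have h0: "br b x1 \<in> V False" using grade[OF b(2) xs(2)] by simp
        have h1: "br b x0 \<in> V True" using grade[OF b(2) xs(1)] by simp
        have "br b x \<in> U" using x by (simp add: K_def)
        then have "br b x1 \<in> U" "br b x0 \<in> U" using graded_comp[OF Ugr _ h0 h1 e] by auto
        then show "\<exists>a\<in>K \<inter> V False. \<exists>b\<in>K \<inter> V True. x = a + b"
          using xs by (auto simp: K_def)
      qed
      have Kinv: "invar K"
      proof (rule invar_hom[OF Ksub])
        fix m' j w assume m': "m' \<in> M0" "m' \<in> V j" and w: "w \<in> K"
        have e: "br b (br m' w) = br (br b m') w + (if j then - br m' (br b w) else br m' (br b w))"
          using jac[OF b(2) m'(2), of w] by simp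
        have 1: "br (br b m') w \<in> U" using killU[OF g b(1) m'(1)] .
        have 2: "br m' (br b w) \<in> U" using Uinv' m'(1) w by (simp add: K_def)
        show "br m' w \<in> K" unfolding K_def mem_Collect_eq e
          using subspace_add[OF Usub 1 2] subspace_add[OF Usub 1 subspace_neg[OF Usub 2]]
          by (cases j) simp_all
      qed
      have "good K" unfolding good_def using Ksub Kgr Kinv UK M0U by auto
      then show ?thesis using UK \<open>br b v \<in> K\<close> v KU by blast
    next
      case noodd: False
      obtain x where "x \<notin> U" using nU by blast
      obtain x0 x1 where xs: "x0 \<in> V False" "x1 \<in> V True" "x = x0 + x1" using decomp .
      obtain v i where v: "v \<notin> U" "v \<in> V i"
        using xs \<open>x \<notin> U\<close> subspace_add[OF Usub] by blast
      define U' where "U' = span (insert v U)"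
      have spU: "span U = U" using Usub by simp
      have U'eq: "U' = {x. \<exists>k. x - sc k v \<in> U}" unfolding U'_def span_insert spU ..
      have U'sub: "subspace U'" unfolding U'_def by simp
      have UU': "U \<subseteq> U'" unfolding U'_def using span_superset by blast
      have vU': "v \<in> U'" unfolding U'_def by (simp add: span_base)
      have dU': "dim U' = dim U + 1"
        unfolding U'_def dim_span dim_insert spU using v(1) by simp
      have U'U: "U' \<noteq> UNIV" using dU' d by auto
      have U'gr: "graded U'"
        unfolding graded_def
      proof
        fix x assume "x \<in> U'"
        then obtain k where k: "x - sc k v \<in> U" unfolding U'eq by blast
        obtain u0 u1 where u: "u0 \<in> U" "u0 \<in> V False" "u1 \<in> U" "u1 \<in> V True" "x - sc k v = u0 + u1"
          using graded_dec[OF Ugr k] .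
        have kv: "sc k v \<in> U'" "sc k v \<in> V i"
          using subspace_scale[OF U'sub vU'] subspace_scale[OF V_sub v(2)] by auto
        show "\<exists>a\<in>U' \<inter> V False. \<exists>b\<in>U' \<inter> V True. x = a + b"
        proof (cases i)
          case True
          have "x = u0 + (u1 + sc k v)" using u(5) by (simp add: algebra_simps)
          moreover have "u1 + sc k v \<in> U'" "u1 + sc k v \<in> V True"
            using subspace_add[OF U'sub] subspace_add[OF V_sub] kv u UU' True by auto
          ultimately show ?thesis using u UU' by blast
        next
          case False
          have "x = (u0 + sc k v) + u1" using u(5) by (simp add: algebra_simps)
          moreover have "u0 + sc k v \<in> U'" "u0 + sc k v \<in> V False"
            using subspace_add[OF U'sub] subspace_add[OF V_sub] kv u UU' False by auto
          ultimately show ?thesis using u UU' by blast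
        qed
      qed
      have U'inv: "invar U'"
      proof (rule invar_hom[OF U'sub])
        fix m j w assume m: "m \<in> M0" "m \<in> V j" and w: "w \<in> U'"
        then obtain k where k: "w - sc k v \<in> U" unfolding U'eq by blast
        have e: "br m w = br m (w - sc k v) + sc k (br m v)" by (simp add: br_diffR br_scR)
        have 1: "br m (w - sc k v) \<in> U'" using Uinv' m(1) k UU' by blast
        have 2: "br m v \<in> U'"
        proof (cases j)
          case True
          then have "m \<in> V True" using m(2) by simp
          then show ?thesis using noodd m(1) UU' by blast
        next
          case False
          then have "m \<in> V False" using m(2) by simp
          then obtain c where c: "\<forall>v. br m v - sc c v \<in> U" using noeven m(1) by blast
          have a: "br m v - sc c v \<in> U'" using c UU' by blast
          have b: "sc c v \<in> U'" by (rule subspace_scale[OF U'sub vU'])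
          have "br m v - sc c v + sc c v \<in> U'" by (rule subspace_add[OF U'sub a b])
          then show ?thesis by simp
        qed
        show "br m w \<in> U'" unfolding e using 1 2 subspace_add[OF U'sub] subspace_scale[OF U'sub] by blast
      qed
      have "good U'" unfolding good_def using U'sub U'gr U'inv UU' M0U by auto
      moreover have "U \<subset> U'" using UU' vU' v(1) by blast
      ultimately show ?thesis using U'U by blast
    qed
  qed
qed

lemma hyper:
  shows "good U \<Longrightarrow> U \<noteq> UNIV \<Longrightarrow> \<exists>H. good H \<and> U \<subseteq> H \<and> dim (UNIV :: 'v set) = dim H + 1"
proof (induction "dim (UNIV :: 'v set) - dim U" arbitrary: U rule: less_induct)
  case less
  show ?case
  proof (cases "dim (UNIV :: 'v set) = dim U + 1")
    case True
    then show ?thesis using less.prems by blast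
  next
    case False
    obtain U' where U': "good U'" "U \<subset> U'" "U' \<noteq> UNIV" using step[OF less.prems False] by blast
    have "subspace U" "subspace U'" using U'(1) less.prems(1) unfolding good_def by auto
    then have sU: "span U = U" and sU': "span U' = U'" using span_eq_iff by blast+
    have "span U \<subset> span U'" unfolding sU sU' by (rule U'(2))
    then have "dim U < dim U'" by (rule dim_psubset)
    moreover have "dim U' \<le> dim (UNIV :: 'v set)" by (rule dim_subset) simp
    ultimately have "dim (UNIV :: 'v set) - dim U' < dim (UNIV :: 'v set) - dim U" by linarith
    from less.hyps[OF this U'(1,3)] U'(2) show ?thesis by blast
  qed
qed

lemma H_alg:
  assumes gH: "good H" and dec: "\<And>v. \<exists>m\<in>M0. \<exists>p\<in>P. v = m + p"
    and PP: "\<And>p p'. p \<in> P \<Longrightarrow> p' \<in> P \<Longrightarrow> br p p' \<in> M0"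
    and x: "x \<in> H" and y: "y \<in> H"
  shows "br x y \<in> H"
proof -
  have Hsub: "subspace H" and Hgr: "graded H" and M0H: "M0 \<subseteq> H" and Hinv: "invar H"
    using gH unfolding good_def by auto
  have Hinv': "br m u \<in> H" if "m \<in> M0" "u \<in> H" for m u using Hinv that unfolding invar_def by blast
  obtain m p where mp: "m \<in> M0" "p \<in> P" "x = m + p" using dec by blast
  obtain m' p' where mp': "m' \<in> M0" "p' \<in> P" "y = m' + p'" using dec by blast
  have pH: "p \<in> H" using subspace_diff[OF Hsub x, of m] mp M0H by auto
  have e: "br x y = br m y + br p m' + br p p'"
    unfolding mp(3) by (simp add: mp'(3) br_addL br_addR add.assoc)
  have 1: "br m y \<in> H" using Hinv' mp(1) y .
  have 2: "br p m' \<in> H"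
    by (rule swap[OF M0gr Hgr Hsub _ mp'(1) pH]) (rule Hinv')
  have 3: "br p p' \<in> H" using PP mp(2) mp'(2) M0H by blast
  show ?thesis unfolding e using 1 2 3 subspace_add[OF Hsub] by blast
qed

end

lemma nat_switch: "Q (0::nat) \<Longrightarrow> \<not> Q n \<Longrightarrow> \<exists>j. Q j \<and> \<not> Q (Suc j)"
  by (induction n) auto

lemma main:
  assumes S: "sub_superalgebra sc V br S" and SU: "S \<noteq> UNIV" and nil: "\<exists>n. LL n = {0}"
  shows "\<exists>T. sub_superalgebra sc V br T \<and> S \<subseteq> T \<and> dim (UNIV::'v set) = dim T + 1"
proof -
  have Ssub: "subspace S" and Sgr: "graded S" and Salg: "\<And>x y. x \<in> S \<Longrightarrow> y \<in> S \<Longrightarrow> br x y \<in> S"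
    using S unfolding sub_superalgebra_def graded_def by auto
  define pl where "pl A B = {a + b | a b. a \<in> A \<and> b \<in> B}" for A B :: "'v set"
  have pl_sub: "subspace (pl A B)" if "subspace A" "subspace B" for A B
    unfolding pl_def by (rule subspace_sums[OF that])
  have pl_gr: "graded (pl A B)" if "graded A" "graded B" for A B
    unfolding pl_def by (rule graded_plus[OF that])
  have inl: "a \<in> pl A B" if "a \<in> A" "subspace B" for a A B
    unfolding pl_def using that subspace_0[OF that(2)] by force
  have inr: "b \<in> pl A B" if "b \<in> B" "subspace A" for b A B
    unfolding pl_def using that subspace_0[OF that(2)] by force
  have fin: "\<exists>T. sub_superalgebra sc V br T \<and> S \<subseteq> T \<and> dim (UNIV::'v set) = dim T + 1"
    if M0sub: "subspace M0" and M0gr: "graded M0"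
    and M0alg: "\<And>x y. x \<in> M0 \<Longrightarrow> y \<in> M0 \<Longrightarrow> br x y \<in> M0"
    and Nkill: "\<And>n v. n \<in> M0 \<Longrightarrow> n \<in> NN \<Longrightarrow> br n v \<in> M0"
    and M0U: "M0 \<noteq> UNIV" and SM0: "S \<subseteq> M0"
    and dec: "\<And>v. \<exists>m\<in>M0. \<exists>p\<in>P. v = m + p"
    and PP: "\<And>p p'. p \<in> P \<Longrightarrow> p' \<in> P \<Longrightarrow> br p p' \<in> M0" for M0 P
  proof -
    have "good M0 M0" by (rule good_M0[OF M0sub M0gr M0alg Nkill])
    then obtain H where H: "good M0 H" "M0 \<subseteq> H" "dim (UNIV :: 'v set) = dim H + 1"
      using hyper[OF M0sub M0gr M0alg Nkill _ M0U] by blast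
    have Hc: "br x y \<in> H" if "x \<in> H" "y \<in> H" for x y
      by (rule H_alg[OF M0sub M0gr M0alg Nkill H(1) dec PP that])
    have "sub_superalgebra sc V br H"
      using good_D[OF M0sub M0gr M0alg Nkill H(1)] Hc unfolding sub_superalgebra_def graded_def by blast
    then show ?thesis using H SM0 by blast
  qed
  show ?thesis
  proof (cases "pl S NN = UNIV")
    case False
    let ?M = "pl S NN"
    have Msub: "subspace ?M" using pl_sub[OF Ssub brk_sub] .
    have NM: "NN \<subseteq> ?M" using inr[OF _ Ssub] by blast
    show ?thesis
    proof (rule fin[of ?M UNIV])
      show "subspace ?M" by (rule Msub)
      show "graded ?M" by (rule pl_gr[OF Sgr NN_graded])
      show "br x y \<in> ?M" for x y using NM brk_base[of x UNIV y UNIV] by blast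
      show "br n v \<in> ?M" for n v using NM brk_base[of n UNIV v UNIV] by blast
      show "?M \<noteq> UNIV" by (rule False)
      show "S \<subseteq> ?M" using inl[OF _ brk_sub] by blast
      show "\<exists>m\<in>?M. \<exists>p\<in>UNIV. v = m + p" for v using subspace_0[OF Msub] by force
      show "br p p' \<in> ?M" for p p' using NM brk_base[of p UNIV p' UNIV] by blast
    qed
  next
    case True
    obtain n where n: "LL n = {0}" using nil by blast
    have "pl S (LL n) = S" unfolding n pl_def by auto
    then have notn: "\<not> pl S (LL n) = UNIV" using SU by simp
    have q0: "pl S (LL 0) = UNIV" using True by simp
    have "\<exists>j. pl S (LL j) = UNIV \<and> \<not> pl S (LL (Suc j)) = UNIV"
      by (rule nat_switch[of "\<lambda>k. pl S (LL k) = UNIV", OF q0 notn])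
    then obtain j where j: "pl S (LL j) = UNIV" "pl S (LL (Suc j)) \<noteq> UNIV" by blast
    let ?L = "LL (Suc j)"
    let ?M = "pl S ?L"
    have Msub: "subspace ?M" using pl_sub[OF Ssub LL_sub] .
    have LM: "?L \<subseteq> ?M" using inr[OF _ Ssub] by blast
    have SM: "S \<subseteq> ?M" using inl[OF _ LL_sub] by blast
    have Malg: "br x y \<in> ?M" if xM: "x \<in> ?M" and yM: "y \<in> ?M" for x y
    proof -
      obtain s l where x: "x = s + l" "s \<in> S" "l \<in> ?L" using xM unfolding pl_def by blast
      obtain s' l' where y: "y = s' + l'" "s' \<in> S" "l' \<in> ?L" using yM unfolding pl_def by blast
      have "br x y = br s s' + br s l' + br l s' + br l l'" unfolding x(1) y(1) by (rule br4)
      moreover have "br s s' \<in> ?M" using SM Salg x y by blast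
      moreover have "br s l' \<in> ?M" using LM LL_ideal[OF y(3)] by blast
      moreover have "br l s' \<in> ?M" using LM LL_idealR[OF x(3)] by blast
      moreover have "br l l' \<in> ?M" using LM LL_ideal[OF y(3)] by blast
      ultimately show ?thesis using sub_add4[OF Msub] by metis
    qed
    show ?thesis
    proof (rule fin[of ?M "LL j"])
      show "subspace ?M" by (rule Msub)
      show "graded ?M" by (rule pl_gr[OF Sgr LL_graded])
      show "br x y \<in> ?M" if "x \<in> ?M" "y \<in> ?M" for x y using Malg that .
      show "br nn v \<in> ?M" if nn: "nn \<in> ?M" "nn \<in> NN" for nn v
      proof -
        have "v \<in> pl S (LL j)" using j(1) by simp
        then obtain s p where v: "v = s + p" "s \<in> S" "p \<in> LL j" unfolding pl_def by blast
        have 1: "br nn s \<in> ?M" using Malg[OF nn(1)] SM v(2) by blast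
        have "br nn p \<in> ?L" using brk_base[OF nn(2) v(3)] by simp
        then have 2: "br nn p \<in> ?M" using LM by blast
        show ?thesis unfolding v(1) br_addR using subspace_add[OF Msub 1 2] .
      qed
      show "?M \<noteq> UNIV" by (rule j(2))
      show "S \<subseteq> ?M" by (rule SM)
      show "\<exists>m\<in>?M. \<exists>p\<in>LL j. v = m + p" for v
      proof -
        have "v \<in> pl S (LL j)" using j(1) by simp
        then obtain s p where v: "v = s + p" "s \<in> S" "p \<in> LL j" unfolding pl_def by blast
        then show ?thesis using SM by blast
      qed
      show "br p p' \<in> ?M" if "p \<in> LL j" "p' \<in> LL j" for p p'
      proof -
        have "p \<in> NN" using LL_subN that(1) by blast
        then have "br p p' \<in> brk_sp sc br NN (LL j)" using that(2) by (rule brk_base)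
        then have "br p p' \<in> ?L" by simp
        then show ?thesis using LM by blast
      qed
    qed
  qed
qed

end

theorem lemma5p1:
  fixes sc :: "'k::field \<Rightarrow> 'v::ab_group_add \<Rightarrow> 'v"
    and V :: "bool \<Rightarrow> 'v set"
    and br :: "'v \<Rightarrow> 'v \<Rightarrow> 'v"
    and S :: "'v set"
  assumes "alg_closed_field TYPE('k)"
    and "CHAR('k) > 2"
    and "lie_superalgebra sc V br"
    and "fin_dim sc"
    and "completely_solvable sc br"
    and "sub_superalgebra sc V br S"
    and "S \<noteq> UNIV"
  shows "\<exists>T. sub_superalgebra sc V br T \<and> S \<subseteq> T \<and>
           vector_space.dim sc (UNIV :: 'v set) = vector_space.dim sc T + 1"
proof -
  interpret vs: vector_space sc using assms(3) unfolding lie_superalgebra_def by blast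
  obtain B0 where B0: "finite B0" "vs.span B0 = UNIV" using assms(4) unfolding fin_dim_def by blast
  obtain B where B: "B \<subseteq> UNIV" "vs.independent B" "UNIV \<subseteq> vs.span B" "card B = vs.dim UNIV"
    using vs.basis_exists[of UNIV] by blast
  have fB: "finite B" using vs.independent_span_bound[OF B0(1) B(2)] B0(2) by auto
  have two: "(2::'k) \<noteq> 0"
  proof
    assume "(2::'k) = 0"
    then have "of_nat 2 = (0::'k)" by simp
    then have "CHAR('k) dvd 2" by (simp only: of_nat_eq_0_iff_char_dvd)
    then have "CHAR('k) \<le> 2" by (rule dvd_imp_le) simp
    then show False using assms(2) by simp
  qed
  interpret L: LSA sc B V br
    by unfold_locales (use B fB assms(1,3) two in auto)
  show ?thesis
    using L.main[OF assms(6,7)] assms(5) unfolding completely_solvable_def nilpotent_sub_def by blast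
qed

end
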